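(* Write the $n$-th $*$-cocharacter of $M_{1,2}(F)$ as $\chi_n^*(M_{1,2}(F))=\sum m_{\langle\lambda\rangle}\chi_{\langle\lambda\rangle}$, the sum over multipartitions $\langle\lambda\rangle=(\lambda(1),\lambda(2),\lambda(3),\lambda(4))\vdash n$ with $h(\lambda(1))\le2$, $h(\lambda(2))\le3$, $h(\lambda(3))\le2$, $h(\lambda(4))\le2$. If $\langle\lambda\rangle=(\lambda(1),\lambda(2),\emptyset,\emptyset)$, then $m_{\langle\lambda\rangle}\neq0$ if and only if $h(\lambda(1))\le1$.
   Context: $F$ is a field of characteristic zero. $M_{1,2}(F)$ is $M_3(F)$ with $\mathbb{Z}_2$-grading with even part spanned by $e_{11},e_{22},e_{23},e_{32},e_{33}$, odd part by $e_{12},e_{13},e_{21},e_{31}$, and orthosymplectic superinvolution $*$ sending the matrix with rows $(a,b,c),(d,e,f),(g,h,i)$ to the matrix with rows $(a,-g,d),(c,i,-f),(-b,-h,e)$. Its even symmetric, even skew, odd symmetric, odd skew parts are $\mathrm{span}\{e_{11},e_{22}+e_{33}\}$, $\mathrm{span}\{e_{22}-e_{33},e_{23},e_{32}\}$, $\mathrm{span}\{e_{12}-e_{31},e_{13}+e_{21}\}$, $\mathrm{span}\{e_{12}+e_{31},e_{13}-e_{21}\}$. In the free $*$-superalgebra on variables $y_i^+,y_i^-,z_i^+,z_i^-$ (even symmetric, even skew, odd symmetric, odd skew), a $*$-identity is a polynomial vanishing under all substitutions of the variables by elements of the corresponding parts; $Id_2^*$ denotes the set of them. $P_n^*$ is the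 span of the monomials $w_{\sigma(1)}\cdots w_{\sigma(n)}$, $\sigma\in S_n$, $w_i\in\{y_i^+,y_i^-,z_i^+,z_i^-\}$. The group $\mathbb{H}_n=(\mathbb{Z}_2\times\mathbb{Z}_2)\wr S_n$, with $\mathbb{Z}_2\times\mathbb{Z}_2=\{1,*,\zeta,*\zeta\}$, acts on $P_n^*$: $h=(a_1,\dots,a_n;\sigma)$ sends $y_i^+\mapsto y_{\sigma(i)}^+$, $y_i^-\mapsto \pm y_{\sigma(i)}^-$ (sign $+$ iff $a_{\sigma(i)}\in\{1,\zeta\}$), $z_i^+\mapsto\pm z_{\sigma(i)}^+$ ($+$ iff $a_{\sigma(i)}\in\{1,*\}$), $z_i^-\mapsto\pm z_{\sigma(i)}^-$ ($+$ iff $a_{\sigma(i)}\in\{1,*\zeta\}$). The character of the $\mathbb{H}_n$-module $P_n^*/(P_n^*\cap Id_2^*(M_{1,2}(F)))$ is the $n$-th $*$-cocharacter $\chi_n^*(M_{1,2}(F))$. Irreducible $\mathbb{H}_n$-characters $\chi_{\langle\lambda\rangle}$ correspond to multipartitions $\langle\lambda\rangle=(\lambda(1),\dots,\lambda(4))$, $\lambda(i)\vdash n_i$, $n_1+\dots+n_4=n$, where $\lambda(1),\lambda(2),\lambda(3),\lambda(4)$ correspond respectively to the variables of type $y^+,y^-,z^+,z^-$; equivalently $m_{\langle\lambda\rangle}$ is the multiplicity of $\chi_{\lambda(1)}\otimes\cdots\otimes\chi_{\lambda(4)}$ in the $S_{n_1}\times\cdots\times S_{n_4}$-character of the multilinear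 polynomials with $n_1,\dots,n_4$ variables of the four types modulo identities. $h(\mu)$ is the number of parts (height) of a partition $\mu$, and $\emptyset$ the empty partition; only multipartitions with the stated height bounds can occur with nonzero multiplicity. *)

theory Defs
  imports Main "HOL.Vector_Spaces" "HOL-Library.Function_Algebras" "HOL-Combinatorics.Permutations"
begin

text \<open>3x3 matrices over F are functions nat => nat => F, indices 0,1,2
  (paper index i corresponds to i-1 here); entries outside are 0.\<close>

type_synonym 'a mat3 = "nat \<Rightarrow> nat \<Rightarrow> 'a"

definition E :: "nat \<Rightarrow> nat \<Rightarrow> 'a::field mat3" where
  "E i j = (\<lambda>p q. if p = i \<and> q = j then 1 else 0)"

definition smat :: "'a::field \<Rightarrow> 'a mat3 \<Rightarrow> 'a mat3" where
  "smat c A = (\<lambda>p q. c * A p q)"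

definition mmul :: "'a::field mat3 \<Rightarrow> 'a mat3 \<Rightarrow> 'a mat3" where
  "mmul A B = (\<lambda>i j. \<Sum>k<3. A i k * B k j)"

definition I3 :: "'a::field mat3" where
  "I3 = (\<lambda>i j. if i = j \<and> i < 3 then 1 else 0)"

definition mprod :: "'a::field mat3 list \<Rightarrow> 'a mat3" where
  "mprod As = foldr mmul As I3"

text \<open>The four homogeneous parts (types 0,1,2,3 = y+, y-, z+, z-).\<close>

definition part :: "nat \<Rightarrow> 'a::field mat3 set" where
  "part t =
    (if t = 0 then {smat a (E 0 0) + smat b (E 1 1 + E 2 2) | a b. True}
     else if t = 1 then {smat a (E 1 1 - E 2 2) + smat b (E 1 2) + smat c (E 2 1) | a b c. True}
     else if t = 2 then {smat a (E 0 1 - E 2 0) + smat b (E 0 2 + E 1 0) | a b. True}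
     else {smat a (E 0 1 + E 2 0) + smat b (E 0 2 - E 1 0) | a b. True})"

definition is_partition :: "nat list \<Rightarrow> bool" where
  "is_partition lam \<longleftrightarrow> (\<forall>x\<in>set lam. 0 < x) \<and> sorted_wrt (\<ge>) lam"

text \<open>Letters 0..n-1 (n = total size) are distributed over the four blocks in order;
  inside block b, its letters fill the Young diagram of lams!b row by row.\<close>

definition block_of :: "nat list list \<Rightarrow> nat \<Rightarrow> nat" where
  "block_of lams k = (LEAST b. k < sum_list (map sum_list (take (Suc b) lams)))"

definition local_idx :: "nat list list \<Rightarrow> nat \<Rightarrow> nat" where
  "local_idx lams k = k - sum_list (map sum_list (take (block_of lams k) lams))"

definition row_in :: "nat list \<Rightarrow> nat \<Rightarrow> nat" where
  "row_in lam k = (LEAST r. k < sum_list (take (Suc r) lam))"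

definition col_in :: "nat list \<Rightarrow> nat \<Rightarrow> nat" where
  "col_in lam k = k - sum_list (take (row_in lam k) lam)"

definition row_lab :: "nat list list \<Rightarrow> nat \<Rightarrow> nat \<times> nat" where
  "row_lab lams k = (block_of lams k, row_in (lams ! block_of lams k) (local_idx lams k))"

definition col_lab :: "nat list list \<Rightarrow> nat \<Rightarrow> nat \<times> nat" where
  "col_lab lams k = (block_of lams k, col_in (lams ! block_of lams k) (local_idx lams k))"

text \<open>A multilinear polynomial in x_0..x_{n-1} is a coefficient function on words;
  only words that are arrangements of 0..n-1 matter.\<close>

definition mlwords :: "nat \<Rightarrow> nat list set" where
  "mlwords n = {w. distinct w \<and> set w = {0..<n}}"

definition act :: "(nat \<Rightarrow> nat) \<Rightarrow> (nat list \<Rightarrow> 'a) \<Rightarrow> (nat list \<Rightarrow> 'a)" where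
  "act \<sigma> f = (\<lambda>v. f (map (inv \<sigma>) v))"   \<comment> \<open>x_i \<mapsto> x_{\<sigma> i}\<close>

definition row_group :: "nat list list \<Rightarrow> (nat \<Rightarrow> nat) set" where
  "row_group lams = {r. r permutes {0..<sum_list (map sum_list lams)} \<and>
      (\<forall>k < sum_list (map sum_list lams). row_lab lams (r k) = row_lab lams k)}"

definition col_group :: "nat list list \<Rightarrow> (nat \<Rightarrow> nat) set" where
  "col_group lams = {c. c permutes {0..<sum_list (map sum_list lams)} \<and>
      (\<forall>k < sum_list (map sum_list lams). col_lab lams (c k) = col_lab lams k)}"

text \<open>Product of the Young symmetrizers of the four tableaux (one per block).\<close>

definition young_sym :: "nat list list \<Rightarrow> (nat list \<Rightarrow> 'a::field) \<Rightarrow> (nat list \<Rightarrow> 'a)" where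
  "young_sym lams f =
     (\<lambda>v. \<Sum>r\<in>row_group lams. \<Sum>c\<in>col_group lams. of_int (sign c) * act r (act c f) v)"

definition admissible :: "nat list list \<Rightarrow> (nat \<Rightarrow> 'a::field mat3) \<Rightarrow> bool" where
  "admissible lams s \<longleftrightarrow> (\<forall>k < sum_list (map sum_list lams). s k \<in> part (block_of lams k))"

text \<open>Evaluation of a polynomial as a function of admissible substitutions; the kernel
  of this map (restricted to P_{n1,...,n4}) is exactly P \<inter> Id_2^*(M_{1,2}(F)), so its image
  is isomorphic to the quotient module.\<close>

definition eval_poly :: "nat list list \<Rightarrow> (nat list \<Rightarrow> 'a::field) \<Rightarrow> (nat \<Rightarrow> 'a mat3) \<Rightarrow> 'a mat3" where
  "eval_poly lams f = (\<lambda>s. if admissible lams s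
      then (\<lambda>i j. \<Sum>w\<in>mlwords (sum_list (map sum_list lams)). f w * mprod (map s w) i j)
      else 0)"

definition fscale :: "'a::field \<Rightarrow> ((nat \<Rightarrow> 'a mat3) \<Rightarrow> 'a mat3) \<Rightarrow> ((nat \<Rightarrow> 'a mat3) \<Rightarrow> 'a mat3)" where
  "fscale c g = (\<lambda>s i j. c * g s i j)"

text \<open>Multiplicity of chi_{lam1} (x) ... (x) chi_{lam4} in the S_{n1} x ... x S_{n4}-character of
  P_{n1,...,n4} / (P_{n1,...,n4} \<inter> Id): the dimension of e_T (P/(P\<inter>Id)), where e_T is the
  Young symmetrizer of the multitableau.\<close>

definition star_mult :: "'a::field itself \<Rightarrow> nat list \<Rightarrow> nat list \<Rightarrow> nat list \<Rightarrow> nat list \<Rightarrow> nat" where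
  "star_mult _ l1 l2 l3 l4 =
     vector_space.dim (fscale :: 'a \<Rightarrow> _)
       (range (\<lambda>f :: nat list \<Rightarrow> 'a. eval_poly [l1,l2,l3,l4] (young_sym [l1,l2,l3,l4] f)))"

end

theory Submission
  imports Defs
begin
definition J3 :: "'a::field mat3" where "J3 = E 1 1 + E 2 2"
lemma sum3: "(\<Sum>k<(3::nat). f k) = f 0 + f 1 + (f 2::'a::comm_monoid_add)"
  by (simp add: numeral_3_eq_3 numeral_2_eq_2 lessThan_Suc add.commute add.left_commute)
lemma comm0: fixes x y :: "'a::field mat3" assumes "x \<in> part 0" "y \<in> part 0 \<union> part 1"
  shows "mmul x y = mmul y x"
  using assms unfolding part_def
  by (auto simp: mmul_def sum3 E_def smat_def fun_eq_iff)

lemma mmul_assoc: "mmul (mmul A B) C = mmul A (mmul B C)"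
  unfolding mmul_def
  by (auto simp: fun_eq_iff sum_distrib_left sum_distrib_right mult.assoc intro: sum.swap)

definition rowsok :: "'a::field mat3 \<Rightarrow> bool" where
  "rowsok A \<longleftrightarrow> (\<forall>i j. 3 \<le> i \<longrightarrow> A i j = 0)"
definition colsok :: "'a::field mat3 \<Rightarrow> bool" where
  "colsok A \<longleftrightarrow> (\<forall>i j. 3 \<le> j \<longrightarrow> A i j = 0)"

lemma I3_mmul: "rowsok A \<Longrightarrow> mmul I3 A = A"
  by (auto simp: mmul_def sum3 I3_def rowsok_def fun_eq_iff)
lemma mmul_I3: "colsok A \<Longrightarrow> mmul A I3 = A"
  by (auto simp: mmul_def sum3 I3_def colsok_def fun_eq_iff)
lemma rowsok_mmul: "rowsok A \<Longrightarrow> rowsok (mmul A B)"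
  by (auto simp: mmul_def rowsok_def)
lemma colsok_mmul: "colsok B \<Longrightarrow> colsok (mmul A B)"
  by (auto simp: mmul_def colsok_def)
lemma rowsok_I3: "rowsok I3" and colsok_I3: "colsok I3"
  by (auto simp: I3_def rowsok_def colsok_def)
lemma part_ok: "x \<in> part t \<Longrightarrow> rowsok x \<and> colsok x"
  unfolding part_def by (auto simp: rowsok_def colsok_def E_def smat_def split: if_splits)

lemma rowsok_mprod: "\<forall>x\<in>set xs. rowsok x \<Longrightarrow> rowsok (mprod xs)"
  by (cases xs) (auto simp: mprod_def rowsok_I3 rowsok_mmul)
lemma foldr_mmul: "rowsok Y \<Longrightarrow> foldr mmul xs Y = mmul (mprod xs) Y"
  by (induction xs) (auto simp: mprod_def I3_mmul mmul_assoc)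
lemma mprod_append: "\<forall>x\<in>set ys. rowsok x \<Longrightarrow> mprod (xs @ ys) = mmul (mprod xs) (mprod ys)"
proof -
  assume a: "\<forall>x\<in>set ys. rowsok x"
  have "mprod (xs @ ys) = foldr mmul xs (mprod ys)" by (simp add: mprod_def)
  also have "\<dots> = mmul (mprod xs) (mprod ys)" using a by (intro foldr_mmul rowsok_mprod)
  finally show ?thesis .
qed
lemma mprod_Cons: "mprod (x # xs) = mmul x (mprod xs)"
  by (simp add: mprod_def)

lemma mmul_sum_left: "mmul (\<Sum>a\<in>A. f a) B = (\<Sum>a\<in>A. mmul (f a) B)"
  by (induction A rule: infinite_finite_induct)
     (auto simp: mmul_def fun_eq_iff distrib_right sum.distrib)
lemma mmul_sum_right: "mmul B (\<Sum>a\<in>A. f a) = (\<Sum>a\<in>A. mmul B (f a))"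
  by (induction A rule: infinite_finite_induct)
     (auto simp: mmul_def fun_eq_iff distrib_left sum.distrib)
lemma smat_mmul: "mmul (smat a A) (smat b B) = smat (a*b) (mmul A B)"
  by (auto simp: mmul_def smat_def fun_eq_iff sum_distrib_left mult_ac)
lemma sum_fun_app: "(\<Sum>a\<in>A. f a) x = (\<Sum>a\<in>A. f a x)"
  by (induction A rule: infinite_finite_induct) auto

lemma pull_out:
  fixes t :: "nat \<Rightarrow> 'a::field mat3"
  assumes "distinct u" "k \<in> set u" "t k \<in> part 0" "\<forall>x\<in>set u. t x \<in> part 0 \<union> part 1"
  shows "mprod (map t u) = mmul (t k) (mprod (map t (removeAll k u)))"
  using assms
proof (induction u)
  case Nil then show ?case by simp
next
  case (Cons x u)
  show ?case
  proof (cases "x = k")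
    case True
    then have "removeAll k u = u" using Cons.prems by (simp add: distinct_removeAll)
    then show ?thesis using True by (simp add: mprod_Cons)
  next
    case False
    then have "mprod (map t (x#u)) = mmul (t x) (mmul (t k) (mprod (map t (removeAll k u))))"
      using Cons by (simp add: mprod_Cons)
    also have "\<dots> = mmul (t k) (mmul (t x) (mprod (map t (removeAll k u))))"
      using comm0[of "t k" "t x"] Cons.prems by (simp flip: mmul_assoc)
    finally show ?thesis using False by (simp add: mprod_Cons)
  qed
qed

abbreviation NN :: "nat list list \<Rightarrow> nat" where "NN lams \<equiv> sum_list (map sum_list lams)"

lemma finite_mlwords: "finite (mlwords n)"
proof -
  have "mlwords n \<subseteq> {xs. set xs \<subseteq> {0..<n} \<and> length xs = n}"
    by (auto simp: mlwords_def dest: distinct_card)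
  moreover have "finite {xs. set xs \<subseteq> {0..<n} \<and> length xs = n}"
    by (rule finite_lists_length_eq) simp
  ultimately show ?thesis by (rule finite_subset)
qed

lemma map_perm_mlwords:
  assumes "\<pi> permutes {0..<n}"
  shows "bij_betw (map \<pi>) (mlwords n) (mlwords n)"
proof (rule bij_betwI[where g="map (inv \<pi>)"])
  have inj: "inj \<pi>" using assms by (rule permutes_inj)
  have invp: "inv \<pi> permutes {0..<n}" using assms by (rule permutes_inv)
  show "map \<pi> \<in> mlwords n \<rightarrow> mlwords n"
    using assms inj by (auto simp: mlwords_def distinct_map inj_on_def permutes_image[OF assms])
  show "map (inv \<pi>) \<in> mlwords n \<rightarrow> mlwords n"
    using invp permutes_inj[OF invp] by (auto simp: mlwords_def distinct_map inj_on_def permutes_image[OF invp])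
  show "map (inv \<pi>) (map \<pi> x) = x" for x
    using permutes_inverses(2)[OF assms] by (simp add: map_idI)
  show "map \<pi> (map (inv \<pi>) y) = y" for y
    using permutes_inverses(1)[OF assms] by (simp add: map_idI)
qed

lemma sum_mlwords_reindex:
  assumes "\<pi> permutes {0..<n}"
  shows "(\<Sum>w\<in>mlwords n. g w) = (\<Sum>u\<in>mlwords n. g (map \<pi> u))"
  using sum.reindex_bij_betw[OF map_perm_mlwords[OF assms], of g] by simp

lemma row_group_perm: "r \<in> row_group lams \<Longrightarrow> r permutes {0..<NN lams}"
  by (simp add: row_group_def)
lemma col_group_perm: "c \<in> col_group lams \<Longrightarrow> c permutes {0..<NN lams}"
  by (simp add: col_group_def)

lemma finite_row_group: "finite (row_group lams)"
  by (rule finite_subset[of _ "{p. p permutes {0..<NN lams}}"]) (auto simp: row_group_def finite_permutations)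
lemma finite_col_group: "finite (col_group lams)"
  by (rule finite_subset[of _ "{p. p permutes {0..<NN lams}}"]) (auto simp: col_group_def finite_permutations)

lemma EVAL:
  assumes "admissible lams s"
  shows "eval_poly lams (young_sym lams f) s i j =
    (\<Sum>r\<in>row_group lams. \<Sum>c\<in>col_group lams. of_int (sign c) *
        (\<Sum>u\<in>mlwords (NN lams). f u * mprod (map (s \<circ> r \<circ> c) u) i j))"
proof -
  let ?n = "NN lams"
  have "eval_poly lams (young_sym lams f) s i j =
    (\<Sum>w\<in>mlwords ?n. (\<Sum>r\<in>row_group lams. \<Sum>c\<in>col_group lams.
        of_int (sign c) * f (map (inv c) (map (inv r) w))) * mprod (map s w) i j)"
    using assms by (simp add: eval_poly_def young_sym_def act_def)
  also have "\<dots> = (\<Sum>r\<in>row_group lams. \<Sum>c\<in>col_group lams. of_int (sign c) *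
    (\<Sum>w\<in>mlwords ?n. f (map (inv c) (map (inv r) w)) * mprod (map s w) i j))"
    by (simp add: sum_distrib_right sum_distrib_left mult.assoc sum.swap[of _ "mlwords ?n"]
          sum.swap[of _ "mlwords ?n" "col_group lams"])
  also have "\<dots> = (\<Sum>r\<in>row_group lams. \<Sum>c\<in>col_group lams. of_int (sign c) *
        (\<Sum>u\<in>mlwords ?n. f u * mprod (map (s \<circ> r \<circ> c) u) i j))"
  proof (intro sum.cong refl)
    fix r c assume r: "r \<in> row_group lams" and c: "c \<in> col_group lams"
    have rp: "r permutes {0..<?n}" and cp: "c permutes {0..<?n}"
      using r c by (auto simp: row_group_perm col_group_perm)
    have rc: "r \<circ> c permutes {0..<?n}" using permutes_compose[OF cp rp] .
    have "(\<Sum>w\<in>mlwords ?n. f (map (inv c) (map (inv r) w)) * mprod (map s w) i j) =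
          (\<Sum>u\<in>mlwords ?n. f u * mprod (map (s \<circ> r \<circ> c) u) i j)"
      apply (subst sum_mlwords_reindex[OF rc])
      using permutes_inverses(2)[OF rp] permutes_inverses(2)[OF cp]
      by (simp add: map_idI comp_assoc)
    then show "of_int (sign c) * (\<Sum>w\<in>mlwords ?n. f (map (inv c) (map (inv r) w)) * mprod (map s w) i j) =
          of_int (sign c) * (\<Sum>u\<in>mlwords ?n. f u * mprod (map (s \<circ> r \<circ> c) u) i j)" by simp
  qed
  finally show ?thesis .
qed

lemma sum_take_mono: "i \<le> j \<Longrightarrow> sum_list (take i (xs::nat list)) \<le> sum_list (take j xs)"
proof -
  assume "i \<le> j"
  then obtain d where "j = i + d" using le_Suc_ex by blast
  then show ?thesis by (simp add: take_add)
qed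

lemma least_seg:
  fixes xs :: "nat list"
  assumes "sum_list (take b xs) \<le> k" "k < sum_list (take (Suc b) xs)"
  shows "(LEAST b'. k < sum_list (take (Suc b') xs)) = b"
proof (rule Least_equality)
  show "k < sum_list (take (Suc b) xs)" by fact
  fix y assume y: "k < sum_list (take (Suc y) xs)"
  show "b \<le> y"
  proof (rule ccontr)
    assume "\<not> b \<le> y"
    then have "Suc y \<le> b" by simp
    then have "sum_list (take (Suc y) xs) \<le> sum_list (take b xs)" by (rule sum_take_mono)
    with y assms(1) show False by simp
  qed
qed

lemma row_in_eq:
  "sum_list (take b lam) \<le> k \<Longrightarrow> k < sum_list (take (Suc b) lam) \<Longrightarrow> row_in lam k = b"
  unfolding row_in_def by (rule least_seg)

lemma block_of_eq:
  "sum_list (take b (map sum_list lams)) \<le> k \<Longrightarrow> k < sum_list (take (Suc b) (map sum_list lams))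
   \<Longrightarrow> block_of lams k = b"
  unfolding block_of_def by (simp add: take_map[symmetric] least_seg)

lemma local_idx_eq: "block_of lams k = b \<Longrightarrow> local_idx lams k = k - sum_list (take b (map sum_list lams))"
  unfolding local_idx_def by (simp add: take_map)

lemma block_le1:
  assumes "k < sum_list l1 + sum_list l2"
  shows "block_of [l1, l2, [], []] k \<le> 1"
  unfolding block_of_def by (rule Least_le) (use assms in \<open>simp add: numeral_2_eq_2\<close>)

lemma invol_sum:
  fixes g :: "_ \<Rightarrow> 'a::field_char_0"
  assumes "finite C" "\<And>c. c \<in> C \<Longrightarrow> \<phi> c \<in> C" "\<And>c. c \<in> C \<Longrightarrow> \<phi> (\<phi> c) = c"
    "\<And>c. c \<in> C \<Longrightarrow> g (\<phi> c) = - g c"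
  shows "sum g C = 0"
proof -
  have b: "bij_betw \<phi> C C"
    by (rule bij_betwI[where g=\<phi>]) (use assms in auto)
  have "sum g C = sum (g \<circ> \<phi>) C" using sum.reindex_bij_betw[OF b, of g] by simp
  also have "\<dots> = - sum g C" using assms(4) by (simp add: sum_negf)
  finally show ?thesis by simp
qed

lemma block_pres:
  assumes "r \<in> row_group lams" "c \<in> col_group lams" "x < NN lams"
  shows "block_of lams (r (c x)) = block_of lams x" "r (c x) < NN lams"
proof -
  have cx: "c x < NN lams" using permutes_in_image[OF col_group_perm[OF assms(2)]] assms(3) by simp
  have "col_lab lams (c x) = col_lab lams x" using assms(2,3) by (auto simp: col_group_def)
  then have 1: "block_of lams (c x) = block_of lams x" by (simp add: col_lab_def)
  have "row_lab lams (r (c x)) = row_lab lams (c x)" using assms(1) cx by (auto simp: row_group_def)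
  then have "block_of lams (r (c x)) = block_of lams (c x)" by (simp add: row_lab_def)
  with 1 show "block_of lams (r (c x)) = block_of lams x" by simp
  show "r (c x) < NN lams" using permutes_in_image[OF row_group_perm[OF assms(1)]] cx by simp
qed

theorem zero_dir:
  fixes f :: "nat list \<Rightarrow> 'a::field_char_0"
  assumes l1: "l1 = [a, b]" "0 < a" "0 < b"
  shows "eval_poly [l1, l2, [], []] (young_sym [l1, l2, [], []] f) = 0"
proof (rule ext)+
  fix s :: "nat \<Rightarrow> 'a mat3" and i j
  define lams where "lams = [l1, l2, [], []]"
  let ?n = "NN lams"
  have n: "?n = a + b + sum_list l2" using l1 by (simp add: lams_def)
  show "eval_poly [l1, l2, [], []] (young_sym [l1, l2, [], []] f) s i j = 0 s i j"
  proof (cases "admissible lams s")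
    case False then show ?thesis by (simp add: eval_poly_def lams_def)
  next
    case adm: True
    define \<tau> where "\<tau> = Transposition.transpose 0 a"
    have bl0: "block_of lams 0 = 0" and bla: "block_of lams a = 0"
      using l1 by (auto simp: lams_def intro!: block_of_eq)
    have ri0: "row_in [a,b] 0 = 0" by (rule row_in_eq) (use l1 in auto)
    have ria: "row_in [a,b] a = 1" by (rule row_in_eq) (use l1 in auto)
    have cl: "col_lab lams 0 = col_lab lams a"
      using l1 bl0 bla ri0 ria
      by (simp add: col_lab_def local_idx_eq col_in_def lams_def)
    have an: "a < ?n" "0 < ?n" using n l1 by auto
    have tauC: "\<tau> \<in> col_group lams"
      unfolding col_group_def \<tau>_def using an cl
      by (auto simp: permutes_swap_id transpose_def)
    have comp: "c \<circ> \<tau> \<in> col_group lams" if "c \<in> col_group lams" for c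
    proof -
      have "\<tau> k < ?n" if "k < ?n" for k using that an by (auto simp: \<tau>_def transpose_def)
      then show ?thesis using that tauC
        unfolding col_group_def by (auto intro: permutes_compose)
    qed
    have sgn: "sign (c \<circ> \<tau>) = - sign c" if "c \<in> col_group lams" for c
    proof -
      have "permutation c" using col_group_perm[OF that] by (auto intro: permutes_imp_permutation)
      then show ?thesis using l1 by (simp add: sign_compose \<tau>_def permutation_swap_id sign_swap_id)
    qed
    have inner: "(\<Sum>c\<in>col_group lams. of_int (sign c) *
        (\<Sum>u\<in>mlwords ?n. f u * mprod (map (s \<circ> r \<circ> c) u) i j)) = 0"
      if r: "r \<in> row_group lams" for r
    proof (rule invol_sum[where \<phi>="\<lambda>c. c \<circ> \<tau>"])
      show "finite (col_group lams)" by (rule finite_col_group)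
      show "c \<circ> \<tau> \<in> col_group lams" if "c \<in> col_group lams" for c using comp that .
      show "c \<circ> \<tau> \<circ> \<tau> = c" for c by (auto simp: \<tau>_def fun_eq_iff)
      fix c assume c: "c \<in> col_group lams"
      define t where "t = s \<circ> r \<circ> c"
      have tev: "t x \<in> part 0 \<union> part 1" if "x < ?n" for x
      proof -
        have "t x \<in> part (block_of lams x)"
          using adm block_pres[OF r c that] by (auto simp: t_def admissible_def)
        moreover have "block_of lams x \<le> 1" using block_le1[of x l1 l2] that n l1 by (simp add: lams_def)
        ultimately show ?thesis by (cases "block_of lams x") auto
      qed
      have t0: "t 0 \<in> part 0" and ta: "t a \<in> part 0"
        using adm block_pres[OF r c an(2)] block_pres[OF r c an(1)] bl0 bla
        by (auto simp: t_def admissible_def)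
      have eqM: "mprod (map (t \<circ> \<tau>) u) = mprod (map t u)" if u: "u \<in> mlwords ?n" for u
      proof -
        have du: "distinct u" and su: "set u = {0..<?n}" using u by (auto simp: mlwords_def)
        define rest where "rest = removeAll a (removeAll 0 u)"
        have tt: "(t \<circ> \<tau>) x \<in> part 0 \<union> part 1" if "x < ?n" for x
          using tev[of "\<tau> x"] that an by (auto simp: \<tau>_def transpose_def)
        have 1: "mprod (map t u) = mmul (t 0) (mmul (t a) (mprod (map t rest)))"
          using pull_out[of u 0 t] pull_out[of "removeAll 0 u" a t] du su an l1 t0 ta tev
          by (auto simp: rest_def distinct_removeAll)
        have 2: "mprod (map (t \<circ> \<tau>) u) = mmul ((t \<circ> \<tau>) 0) (mmul ((t \<circ> \<tau>) a) (mprod (map (t \<circ> \<tau>) rest)))"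
          using pull_out[of u 0 "t \<circ> \<tau>"] pull_out[of "removeAll 0 u" a "t \<circ> \<tau>"] du su an l1 t0 ta tt
          by (auto simp: rest_def distinct_removeAll \<tau>_def)
        have 3: "map (t \<circ> \<tau>) rest = map t rest"
          by (auto simp: rest_def \<tau>_def transpose_def)
        have "mprod (map (t \<circ> \<tau>) u) = mmul ((t \<circ> \<tau>) 0) (mmul ((t \<circ> \<tau>) a) (mprod (map t rest)))"
          using 2 by (simp only: 3)
        then have "mprod (map (t \<circ> \<tau>) u) = mmul (t a) (mmul (t 0) (mprod (map t rest)))"
          by (simp add: \<tau>_def)
        also have "\<dots> = mmul (mmul (t a) (t 0)) (mprod (map t rest))" by (simp add: mmul_assoc)
        also have "\<dots> = mmul (mmul (t 0) (t a)) (mprod (map t rest))" using comm0[OF t0] ta by simp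
        finally show ?thesis using 1 by (simp add: mmul_assoc)
      qed
      have "(\<Sum>u\<in>mlwords ?n. f u * mprod (map (s \<circ> r \<circ> (c \<circ> \<tau>)) u) i j) =
            (\<Sum>u\<in>mlwords ?n. f u * mprod (map (s \<circ> r \<circ> c) u) i j)"
        using eqM by (intro sum.cong refl) (simp add: t_def comp_assoc)
      then show "of_int (sign (c \<circ> \<tau>)) * (\<Sum>u\<in>mlwords ?n. f u * mprod (map (s \<circ> r \<circ> (c \<circ> \<tau>)) u) i j) =
          - (of_int (sign c) * (\<Sum>u\<in>mlwords ?n. f u * mprod (map (s \<circ> r \<circ> c) u) i j))"
        using sgn[OF c] by simp
    qed
    show ?thesis
      using EVAL[OF adm, of f i j] inner by (simp add: lams_def)
  qed
qed

lemma vs_fscale: "vector_space (fscale :: 'a::field \<Rightarrow> ((nat \<Rightarrow> 'a mat3) \<Rightarrow> 'a mat3) \<Rightarrow> _)"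
  by unfold_locales (auto simp: fscale_def fun_eq_iff algebra_simps)

context vector_space begin
lemma dim_zero_set: "V \<subseteq> {0} \<Longrightarrow> dim V = 0"
proof -
  assume V: "V \<subseteq> {0}"
  obtain B where B: "B \<subseteq> V" "independent B" "V \<subseteq> span B" "card B = dim V" by (rule basis_exists)
  have "0 \<notin> B" using B(2) dependent_zero by blast
  then have "B = {}" using B(1) V by blast
  then show ?thesis using B(4) by simp
qed
lemma dim_pos_set:
  assumes "v \<in> V" "v \<noteq> 0" "V \<subseteq> span T" "finite T"
  shows "dim V \<noteq> 0"
proof
  assume d: "dim V = 0"
  obtain B where B: "B \<subseteq> V" "independent B" "V \<subseteq> span B" "card B = dim V" by (rule basis_exists)
  have "finite B" using independent_span_bound[OF assms(4) B(2)] B(1) assms(3) by auto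
  then have "B = {}" using B(4) d by simp
  then show False using B(3) assms(1,2) by auto
qed
end

definition delta :: "nat list \<Rightarrow> nat list \<Rightarrow> 'a::field" where
  "delta u = (\<lambda>w. if w = u then 1 else 0)"

lemma EVAL_delta:
  assumes "admissible lams s" "u \<in> mlwords (NN lams)"
  shows "eval_poly lams (young_sym lams (delta u)) s i j =
    (\<Sum>r\<in>row_group lams. \<Sum>c\<in>col_group lams. of_int (sign c) * mprod (map (s \<circ> r \<circ> c) u) i j)"
proof -
  have "(\<Sum>w\<in>mlwords (NN lams). delta u w * mprod (map t w) i j) = mprod (map t u) i j" for t :: "nat \<Rightarrow> 'a mat3"
    using assms(2) by (simp add: delta_def finite_mlwords if_distrib[of "\<lambda>x. x * _"] cong: if_cong)
  then show ?thesis by (simp add: EVAL[OF assms(1)])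
qed

lemma eval_decomp:
  "eval_poly lams (young_sym lams f) =
    (\<Sum>u\<in>mlwords (NN lams). fscale (f u) (eval_poly lams (young_sym lams (delta u))))"
proof (rule ext)+
  fix s :: "nat \<Rightarrow> 'a mat3" and i j
  show "eval_poly lams (young_sym lams f) s i j =
    (\<Sum>u\<in>mlwords (NN lams). fscale (f u) (eval_poly lams (young_sym lams (delta u)))) s i j"
  proof (cases "admissible lams s")
    case False then show ?thesis by (simp add: eval_poly_def sum_fun_app fscale_def)
  next
    case True
    let ?M = "\<lambda>r c u. mprod (map (s \<circ> r \<circ> c) u) i j"
    let ?U = "mlwords (NN lams)"
    have "(\<Sum>u\<in>?U. fscale (f u) (eval_poly lams (young_sym lams (delta u)))) s i j
        = (\<Sum>u\<in>?U. f u * (\<Sum>r\<in>row_group lams. \<Sum>c\<in>col_group lams. of_int (sign c) * ?M r c u))"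
      by (simp add: sum_fun_app fscale_def EVAL_delta[OF True])
    also have "\<dots> = (\<Sum>u\<in>?U. \<Sum>r\<in>row_group lams. \<Sum>c\<in>col_group lams. of_int (sign c) * (f u * ?M r c u))"
      by (simp only: sum_distrib_left mult.left_commute)
    also have "\<dots> = (\<Sum>r\<in>row_group lams. \<Sum>u\<in>?U. \<Sum>c\<in>col_group lams. of_int (sign c) * (f u * ?M r c u))"
      by (rule sum.swap)
    also have "\<dots> = (\<Sum>r\<in>row_group lams. \<Sum>c\<in>col_group lams. \<Sum>u\<in>?U. of_int (sign c) * (f u * ?M r c u))"
      by (simp only: sum.swap[of _ ?U])
    also have "\<dots> = eval_poly lams (young_sym lams f) s i j"
      by (simp only: EVAL[OF True] sum_distrib_left)
    finally show ?thesis by simp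
  qed
qed

definition BP :: "nat list list \<Rightarrow> (nat \<Rightarrow> nat) set" where
  "BP Ls = {c. c permutes set (concat Ls) \<and> (\<forall>L\<in>set Ls. \<forall>x\<in>set L. c x \<in> set L)}"

definition Alt :: "(nat \<Rightarrow> 'a::field mat3) \<Rightarrow> nat list \<Rightarrow> 'a mat3" where
  "Alt t L = (\<Sum>\<sigma>\<in>{\<sigma>. \<sigma> permutes set L}. smat (of_int (sign \<sigma>)) (mprod (map (t \<circ> \<sigma>) L)))"

lemma bij_restr:
  assumes "d permutes S" "finite A" "d ` A \<subseteq> A"
  shows "restrict_id d A permutes A"
proof (rule permutes_restrict_id)
  have "inj_on d A" using permutes_inj[OF assms(1)] by (auto simp: inj_on_def inj_def)
  then show "bij_betw d A A" using endo_inj_surj[OF assms(2,3)] by (simp add: bij_betw_def)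
qed

lemma factor:
  fixes t :: "nat \<Rightarrow> 'a::field mat3"
  assumes "distinct (concat Ls)" "\<And>x. rowsok (t x)"
  shows "(\<Sum>c\<in>BP Ls. smat (of_int (sign c)) (mprod (map (t \<circ> c) (concat Ls)))) =
         foldr (\<lambda>L acc. mmul (Alt t L) acc) Ls I3"
  using assms(1)
proof (induction Ls)
  case Nil
  have "BP [] = {id}" by (auto simp: BP_def)
  then show ?case by (simp add: mprod_def smat_def)
next
  case (Cons L Ls)
  define A where "A = set L"
  define B where "B = set (concat Ls)"
  have dis: "A \<inter> B = {}" and dLs: "distinct (concat Ls)" and dL: "distinct L"
    using Cons.prems by (auto simp: A_def B_def)
  have fA: "finite A" and fB: "finite B" by (auto simp: A_def B_def)
  let ?S = "{\<sigma>. \<sigma> permutes A} \<times> BP Ls"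
  let ?g = "\<lambda>d. smat (of_int (sign d)) (mprod (map (t \<circ> d) (concat (L # Ls))))"
  have "sum (\<lambda>(\<sigma>, c). ?g (\<sigma> \<circ> c)) ?S = sum ?g (BP (L # Ls))"
  proof (rule sum.reindex_bij_witness[where i="\<lambda>d. (restrict_id d A, restrict_id d B)" and j="\<lambda>(\<sigma>, c). \<sigma> \<circ> c"])
    fix p assume p: "p \<in> ?S"
    show "?g ((\<lambda>(\<sigma>, c). \<sigma> \<circ> c) p) = (\<lambda>(\<sigma>, c). ?g (\<sigma> \<circ> c)) p" by (auto split: prod.splits)
  next
    fix p assume p: "p \<in> ?S"
    obtain \<sigma> c where pc: "p = (\<sigma>, c)" and s: "\<sigma> permutes A" and c: "c \<in> BP Ls" using p by auto
    have cp: "c permutes B" using c by (simp add: BP_def B_def)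
    have cA: "c x = x" if "x \<in> A" for x using permutes_not_in[OF cp] that dis by auto
    have sB: "\<sigma> x = x" if "x \<in> B" for x using permutes_not_in[OF s] that dis by auto
    have cB: "c x \<in> B" if "x \<in> B" for x using permutes_in_image[OF cp] that by auto
    show "(restrict_id ((\<lambda>(\<sigma>, c). \<sigma> \<circ> c) p) A, restrict_id ((\<lambda>(\<sigma>, c). \<sigma> \<circ> c) p) B) = p"
      using cA sB cB permutes_not_in[OF s] permutes_not_in[OF cp]
      by (auto simp: pc restrict_id_def fun_eq_iff)
    show "(\<lambda>(\<sigma>, c). \<sigma> \<circ> c) p \<in> BP (L # Ls)"
    proof -
      have "\<sigma> \<circ> c permutes A \<union> B"
        using permutes_compose[OF permutes_subset[OF cp, of "A \<union> B"] permutes_subset[OF s, of "A \<union> B"]] by auto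
      moreover have "\<forall>L'\<in>set Ls. \<forall>x\<in>set L'. \<sigma> (c x) \<in> set L'"
      proof (intro ballI)
        fix L' x assume L': "L' \<in> set Ls" and x: "x \<in> set L'"
        have "c x \<in> set L'" using c L' x by (auto simp: BP_def)
        moreover then have "c x \<in> B" using L' by (auto simp: B_def)
        ultimately show "\<sigma> (c x) \<in> set L'" using sB by simp
      qed
      moreover have "\<forall>x\<in>A. \<sigma> (c x) \<in> A" using cA permutes_in_image[OF s] by auto
      ultimately show ?thesis by (auto simp: pc BP_def A_def B_def)
    qed
  next
    fix d assume d: "d \<in> BP (L # Ls)"
    have dp: "d permutes A \<union> B" using d by (simp add: BP_def A_def B_def)
    have dA: "d x \<in> A" if "x \<in> A" for x using d that by (auto simp: BP_def A_def)
    have dB: "d x \<in> B" if "x \<in> B" for x using d that by (auto simp: BP_def B_def)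
    show "(\<lambda>(\<sigma>, c). \<sigma> \<circ> c) (restrict_id d A, restrict_id d B) = d"
      using dA dB dis permutes_not_in[OF dp] by (auto simp: restrict_id_def fun_eq_iff)
    have "restrict_id d A permutes A" using bij_restr[OF dp fA] dA by auto
    moreover have "restrict_id d B permutes B" using bij_restr[OF dp fB] dB by auto
    moreover have "\<forall>L'\<in>set Ls. \<forall>x\<in>set L'. restrict_id d B x \<in> set L'"
      using d by (auto simp: BP_def B_def restrict_id_def)
    ultimately show "(restrict_id d A, restrict_id d B) \<in> ?S" by (simp add: BP_def B_def)
  qed
  then have "sum ?g (BP (L # Ls)) = sum (\<lambda>(\<sigma>, c). ?g (\<sigma> \<circ> c)) ?S" by simp
  also have "\<dots> = (\<Sum>\<sigma>\<in>{\<sigma>. \<sigma> permutes A}. \<Sum>c\<in>BP Ls.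
      mmul (smat (of_int (sign \<sigma>)) (mprod (map (t \<circ> \<sigma>) L)))
           (smat (of_int (sign c)) (mprod (map (t \<circ> c) (concat Ls)))))"
    unfolding sum.cartesian_product[symmetric]
  proof (intro sum.cong refl)
    fix \<sigma> c assume s: "\<sigma> \<in> {\<sigma>. \<sigma> permutes A}" and c: "c \<in> BP Ls"
    have cp: "c permutes B" using c by (simp add: BP_def B_def)
    have sp: "\<sigma> permutes A" using s by simp
    have cA: "c x = x" if "x \<in> A" for x using permutes_not_in[OF cp] that dis by auto
    have sB: "\<sigma> x = x" if "x \<in> B" for x using permutes_not_in[OF sp] that dis by auto
    have cB: "c x \<in> B" if "x \<in> B" for x using permutes_in_image[OF cp] that by auto
    have m1: "map (t \<circ> (\<sigma> \<circ> c)) L = map (t \<circ> \<sigma>) L" using cA by (auto simp: A_def)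
    have m2: "map (t \<circ> (\<sigma> \<circ> c)) (concat Ls) = map (t \<circ> c) (concat Ls)" using sB cB by (auto simp: B_def)
    have sg: "sign (\<sigma> \<circ> c) = sign \<sigma> * sign c"
      using sign_compose permutes_imp_permutation[OF fA sp] permutes_imp_permutation[OF fB cp] by blast
    show "?g (\<sigma> \<circ> c) = mmul (smat (of_int (sign \<sigma>)) (mprod (map (t \<circ> \<sigma>) L)))
           (smat (of_int (sign c)) (mprod (map (t \<circ> c) (concat Ls))))"
      using assms(2) by (simp add: smat_mmul sg m1 m2 mprod_append)
  qed
  also have "\<dots> = mmul (Alt t L) (\<Sum>c\<in>BP Ls. smat (of_int (sign c)) (mprod (map (t \<circ> c) (concat Ls))))"
    by (simp add: Alt_def A_def mmul_sum_left mmul_sum_right) (rule sum.swap)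
  also have "\<dots> = foldr (\<lambda>L acc. mmul (Alt t L) acc) (L # Ls) I3"
    by (subst Cons.IH[OF dLs]) simp
  finally show ?case .
qed


lemma smat_1: "smat 1 X = X" and smat_m1: "smat (-1) X = - X"
  by (auto simp: smat_def fun_eq_iff)

lemma perms_doubleton: "{p. p permutes {b, c}} = {id, Transposition.transpose b c}"
  using permutes_doubleton_iff[of _ b c] by auto

lemma Alt1: "Alt t [k] = mprod [t k]"
  by (simp add: Alt_def smat_1)

lemma Alt2: "a \<noteq> b \<Longrightarrow> Alt t [a, b] = mprod [t a, t b] - mprod [t b, t a]"
proof -
  assume ab: "a \<noteq> b"
  have "Transposition.transpose a b a \<noteq> id a" using ab by simp
  then have "id \<noteq> Transposition.transpose a b" by metis
  then show ?thesis using ab by (simp add: Alt_def perms_doubleton sign_swap_id smat_1 smat_m1)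
qed

lemma Alt3:
  assumes "distinct [a, b, c]"
  shows "Alt t [a, b, c] = mprod [t a, t b, t c] - mprod [t a, t c, t b] - mprod [t b, t a, t c]
     + mprod [t b, t c, t a] + mprod [t c, t a, t b] - mprod [t c, t b, t a]"
proof -
  have "set [a,b,c] = insert a {b,c}" by auto
  moreover have "a \<notin> {b,c}" using assms by auto
  moreover have "Transposition.transpose b c b \<noteq> id b" using assms by simp
  then have "id \<noteq> Transposition.transpose b c" by metis
  ultimately have "Alt t [a,b,c] = (\<Sum>x\<in>insert a {b,c}. \<Sum>q\<in>{p. p permutes {b,c}}.
      smat (of_int (sign (Transposition.transpose a x \<circ> q))) (mprod (map (t \<circ> (Transposition.transpose a x \<circ> q)) [a,b,c])))"
    unfolding Alt_def by (simp add: sum_over_permutations_insert)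
  also have "\<dots> = smat 1 (mprod [t a, t b, t c]) + smat (-1) (mprod [t a, t c, t b])
     + (smat (-1) (mprod [t b, t a, t c]) + smat 1 (mprod [t b, t c, t a]))
     + (smat (-1) (mprod [t c, t b, t a]) + smat 1 (mprod [t c, t a, t b]))"
    using assms \<open>id \<noteq> Transposition.transpose b c\<close>
    by (simp add: perms_doubleton sign_compose permutation_swap_id sign_swap_id smat_1 smat_m1
          transpose_def)
  finally show ?thesis by (simp add: smat_1 smat_m1 algebra_simps)
qed

definition Hm :: "'a::field mat3" where "Hm = E 1 1 - E 2 2"
definition Xm :: "'a::field mat3" where "Xm = E 1 2 + E 2 1"
definition Ym :: "'a::field mat3" where "Ym = E 1 2 - E 2 1"

lemmas mat_simps = mmul_def sum3 E_def smat_def fun_eq_iff Hm_def Xm_def Ym_def J3_def I3_def mprod_def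

lemma St3_val: "mprod [Hm, Xm, Ym] - mprod [Hm, Ym, Xm] - mprod [Xm, Hm, Ym]
     + mprod [Xm, Ym, Hm] + mprod [Ym, Hm, Xm] - mprod [Ym, Xm, Hm] = smat (-6) (J3::'a::field mat3)"
  by (auto simp: mat_simps)

lemma St2_val: "mprod [Hm, Xm] - mprod [Xm, Hm] = smat 2 (Ym::'a::field mat3)"
  by (auto simp: mat_simps)

lemma St1_val: "mprod [Hm] = (Hm::'a::field mat3)"
  by (auto simp: mat_simps)

definition LBm :: "'a::field mat3 \<Rightarrow> bool" where
  "LBm X \<longleftrightarrow> mmul X J3 = X \<and> mmul J3 X = X \<and> (\<exists>Y. mmul X Y = J3)"

lemma LBm_H: "LBm (Hm :: 'a::field_char_0 mat3)"
  unfolding LBm_def by (auto simp: mat_simps intro!: exI[of _ Hm])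
lemma LBm_Y: "LBm (smat 2 Ym :: 'a::field_char_0 mat3)"
  unfolding LBm_def by (auto simp: mat_simps intro!: exI[of _ "smat (-1/2) Ym"])
lemma LBm_J: "LBm (smat (-6) J3 :: 'a::field_char_0 mat3)"
  unfolding LBm_def by (auto simp: mat_simps intro!: exI[of _ "smat (-1/6) J3"])

lemma LBm_mmul: "LBm X \<Longrightarrow> LBm Z \<Longrightarrow> LBm (mmul X Z)"
proof -
  assume X: "LBm X" and Z: "LBm Z"
  obtain Y1 where Y1: "mmul X Y1 = J3" using X by (auto simp: LBm_def)
  obtain Y2 where Y2: "mmul Z Y2 = J3" using Z by (auto simp: LBm_def)
  have XJ: "mmul X J3 = X" "mmul J3 X = X" using X by (auto simp: LBm_def)
  have ZJ: "mmul Z J3 = Z" "mmul J3 Z = Z" using Z by (auto simp: LBm_def)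
  have "mmul (mmul X Z) (mmul Y2 Y1) = mmul X (mmul (mmul Z Y2) Y1)" by (simp add: mmul_assoc)
  also have "\<dots> = mmul (mmul X J3) Y1" by (simp add: Y2 mmul_assoc)
  also have "\<dots> = J3" by (simp add: XJ Y1)
  finally have "mmul (mmul X Z) (mmul Y2 Y1) = J3" .
  moreover have "mmul (mmul X Z) J3 = mmul X Z" by (simp add: mmul_assoc ZJ)
  moreover have "mmul J3 (mmul X Z) = mmul X Z" by (simp add: XJ flip: mmul_assoc)
  ultimately show ?thesis by (auto simp: LBm_def)
qed

lemma LBm_rowsok: "LBm X \<Longrightarrow> rowsok X"
proof -
  assume "LBm X"
  then have "mmul J3 X = X" by (simp add: LBm_def)
  moreover have "rowsok (J3 :: 'a mat3)" by (auto simp: rowsok_def J3_def E_def)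
  ultimately show ?thesis by (metis rowsok_mmul)
qed

lemma LBm_colsok: "LBm X \<Longrightarrow> colsok X"
proof -
  assume "LBm X"
  then have "mmul X J3 = X" by (simp add: LBm_def)
  moreover have "colsok (J3 :: 'a mat3)" by (auto simp: colsok_def J3_def E_def)
  ultimately show ?thesis by (metis colsok_mmul)
qed

lemma LBm_nz: "LBm X \<Longrightarrow> X \<noteq> 0"
proof
  assume a: "LBm X" "X = 0"
  then obtain Y where "mmul X Y = J3" by (auto simp: LBm_def)
  then have "mmul 0 Y = J3" using a by simp
  then have "mmul 0 Y 1 1 = (J3 1 1 :: 'a)" by simp
  then show False by (simp add: mmul_def J3_def E_def)
qed

lemma foldr_LBm:
  assumes "\<forall>L\<in>set Ls. LBm (F L)"
  shows "foldr (\<lambda>L acc. mmul (F L) acc) Ls I3 = I3 \<or> LBm (foldr (\<lambda>L acc. mmul (F L) acc) Ls I3)"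
  using assms
proof (induction Ls)
  case Nil then show ?case by simp
next
  case (Cons L Ls)
  then have FL: "LBm (F L)" by simp
  from Cons consider "foldr (\<lambda>L acc. mmul (F L) acc) Ls I3 = I3" | "LBm (foldr (\<lambda>L acc. mmul (F L) acc) Ls I3)" by auto
  then show ?case
  proof cases
    case 1 then show ?thesis using FL LBm_colsok[OF FL] by (simp add: mmul_I3)
  next
    case 2 then show ?thesis using LBm_mmul[OF FL 2] by simp
  qed
qed


locale shp =
  fixes l1 l2 :: "nat list" and n1 p q r :: nat
  assumes l1: "(l1 = [] \<and> n1 = 0) \<or> (l1 = [n1] \<and> 0 < n1)"
    and pad: "l2 @ replicate (3 - length l2) 0 = [p, q, r]"
    and qp: "q \<le> p" and rq: "r \<le> q"
begin

lemma len2: "length l2 \<le> 3"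
proof -
  have "length (l2 @ replicate (3 - length l2) 0) = 3" using pad by simp
  then show ?thesis by simp
qed

lemma ST: "sum_list (take i l2) = sum_list (take i [p, q, r])"
proof -
  have "sum_list (take i [p,q,r]) = sum_list (take i (l2 @ replicate (3 - length l2) 0))" using pad by simp
  also have "\<dots> = sum_list (take i l2)" by (simp add: take_append)
  finally show ?thesis by simp
qed

lemma suml1: "sum_list l1 = n1" using l1 by auto
lemma suml2: "sum_list l2 = p + q + r"
  using ST[of 3] len2 by (simp add: numeral_3_eq_3)

lemma NN: "NN [l1, l2, [], []] = n1 + p + q + r"
  using suml1 suml2 by simp

lemma lab0:
  assumes "k < n1"
  shows "block_of [l1, l2, [], []] k = 0" "row_lab [l1, l2, [], []] k = (0, 0)"
    "col_lab [l1, l2, [], []] k = (0, k)"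
proof -
  have l1e: "l1 = [n1]" using l1 assms by auto
  show b: "block_of [l1, l2, [], []] k = 0" by (rule block_of_eq) (use assms l1e in auto)
  have "row_in l1 k = 0" by (rule row_in_eq) (use assms l1e in auto)
  then show "row_lab [l1, l2, [], []] k = (0, 0)" "col_lab [l1, l2, [], []] k = (0, k)"
    using b by (auto simp: row_lab_def col_lab_def local_idx_eq col_in_def)
qed

lemma lab1:
  assumes "i < 3" "j < [p, q, r] ! i"
  shows "block_of [l1, l2, [], []] (n1 + sum_list (take i [p,q,r]) + j) = 1"
    "row_lab [l1, l2, [], []] (n1 + sum_list (take i [p,q,r]) + j) = (1, i)"
    "col_lab [l1, l2, [], []] (n1 + sum_list (take i [p,q,r]) + j) = (1, j)"
proof -
  let ?k = "n1 + sum_list (take i [p,q,r]) + j"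
  have i3: "i = 0 \<or> i = 1 \<or> i = 2" using assms(1) by auto
  have lt: "sum_list (take i [p,q,r]) + j < sum_list (take (Suc i) [p,q,r])"
    using i3 assms(2) by auto
  have le: "sum_list (take (Suc i) [p,q,r]) \<le> p + q + r"
    using i3 by auto
  show b: "block_of [l1, l2, [], []] ?k = 1"
    by (rule block_of_eq) (use suml1 suml2 lt le in \<open>auto simp: numeral_2_eq_2\<close>)
  have "row_in l2 (sum_list (take i [p,q,r]) + j) = i"
    by (rule row_in_eq) (use lt in \<open>auto simp: ST\<close>)
  then show "row_lab [l1, l2, [], []] ?k = (1, i)" "col_lab [l1, l2, [], []] ?k = (1, j)"
    using b suml1 by (auto simp: row_lab_def col_lab_def local_idx_eq col_in_def ST)
qed

lemma cover:
  assumes "k < n1 + p + q + r"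
  shows "k < n1 \<or> (\<exists>i<3. \<exists>j<[p,q,r] ! i. k = n1 + sum_list (take i [p,q,r]) + j)"
proof (cases "k < n1")
  case False
  show ?thesis
  proof (cases "k < n1 + p")
    case True
    then show ?thesis using False by (intro disjI2 exI[of _ 0]) (auto intro!: exI[of _ "k - n1"])
  next
    case F2: False
    show ?thesis
    proof (cases "k < n1 + p + q")
      case True
      then show ?thesis using F2 by (intro disjI2 exI[of _ 1]) (auto intro!: exI[of _ "k - n1 - p"])
    next
      case False
      then show ?thesis using F2 assms
        by (intro disjI2 exI[of _ 2]) (auto simp: numeral_2_eq_2 intro!: exI[of _ "k - n1 - p - q"])
    qed
  qed
qed simp
end

definition Vf :: "nat \<times> nat \<Rightarrow> 'a::field mat3" where
  "Vf bi = (if fst bi = 0 then I3 else if snd bi = 0 then Hm else if snd bi = 1 then Xm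
            else if snd bi = 2 then Ym else 0)"

context shp begin

definition colj :: "nat \<Rightarrow> nat list" where
  "colj j = [n1 + j] @ (if j < q then [n1 + p + j] else []) @ (if j < r then [n1 + p + q + j] else [])"

definition Ls :: "nat list list" where
  "Ls = map (\<lambda>k. [k]) [0..<n1] @ map colj [0..<p]"

lemma mem_colj:
  assumes "j < p"
  shows "x \<in> set (colj j) \<longleftrightarrow> (\<exists>i<3. j < [p,q,r] ! i \<and> x = n1 + sum_list (take i [p,q,r]) + j)"
proof
  assume "x \<in> set (colj j)"
  then show "\<exists>i<3. j < [p,q,r] ! i \<and> x = n1 + sum_list (take i [p,q,r]) + j"
    using assms by (auto simp: colj_def split: if_splits intro: exI[of _ 0] exI[of _ 1] exI[of _ 2])
next
  assume "\<exists>i<3. j < [p,q,r] ! i \<and> x = n1 + sum_list (take i [p,q,r]) + j"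
  then obtain i where "i < 3" "j < [p,q,r] ! i" "x = n1 + sum_list (take i [p,q,r]) + j" by blast
  moreover have "i = 0 \<or> i = 1 \<or> i = 2" using \<open>i < 3\<close> by auto
  ultimately show "x \<in> set (colj j)" by (auto simp: colj_def)
qed

lemma lab_colj:
  assumes "j < p" "x \<in> set (colj j)"
  shows "col_lab [l1, l2, [], []] x = (1, j)"
proof -
  obtain i where "i < 3" "j < [p,q,r] ! i" "x = n1 + sum_list (take i [p,q,r]) + j"
    using mem_colj[OF assms(1)] assms(2) by blast
  then show ?thesis using lab1(3) by simp
qed

lemma key:
  assumes "L \<in> set Ls" "x \<in> set L" "y < n1 + p + q + r"
  shows "col_lab [l1, l2, [], []] y = col_lab [l1, l2, [], []] x \<longleftrightarrow> y \<in> set L"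
proof -
  consider (a) k where "k < n1" "L = [k]" | (b) j where "j < p" "L = colj j"
    using assms(1) by (auto simp: Ls_def)
  then show ?thesis
  proof cases
    case a
    then have x: "col_lab [l1, l2, [], []] x = (0, k)" using assms(2) lab0 by auto
    from cover[OF assms(3)] show ?thesis
    proof
      assume "y < n1" then show ?thesis using x lab0 a by auto
    next
      assume "\<exists>i<3. \<exists>j<[p,q,r] ! i. y = n1 + sum_list (take i [p,q,r]) + j"
      then obtain i j where "i < 3" "j < [p,q,r] ! i" "y = n1 + sum_list (take i [p,q,r]) + j" by blast
      then show ?thesis using x lab1 a by auto
    qed
  next
    case b
    then have x: "col_lab [l1, l2, [], []] x = (1, j)" using assms(2) lab_colj by auto
    from cover[OF assms(3)] show ?thesis
    proof
      assume "y < n1" then show ?thesis using x lab0 b by (auto simp: colj_def)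
    next
      assume "\<exists>i<3. \<exists>j<[p,q,r] ! i. y = n1 + sum_list (take i [p,q,r]) + j"
      then obtain i j' where ij: "i < 3" "j' < [p,q,r] ! i" "y = n1 + sum_list (take i [p,q,r]) + j'" by blast
      have "y \<in> set (colj j) \<longleftrightarrow> j' = j"
      proof
        assume "y \<in> set (colj j)" then show "j' = j" using lab_colj[OF b(1)] lab1[OF ij(1,2)] ij(3) by auto
      next
        assume "j' = j" then show "y \<in> set (colj j)" using mem_colj[OF b(1)] ij by blast
      qed
      then show ?thesis using x lab1[OF ij(1,2)] ij(3) b by auto
    qed
  qed
qed

lemma setLs: "set (concat Ls) = {0..<n1 + p + q + r}"
proof
  show "set (concat Ls) \<subseteq> {0..<n1 + p + q + r}"
    using qp rq by (auto simp: Ls_def colj_def split: if_splits)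
  show "{0..<n1 + p + q + r} \<subseteq> set (concat Ls)"
  proof
    fix y assume "y \<in> {0..<n1 + p + q + r}"
    then have "y < n1 + p + q + r" by simp
    from cover[OF this] show "y \<in> set (concat Ls)"
    proof
      assume "y < n1" then show ?thesis by (auto simp: Ls_def)
    next
      assume "\<exists>i<3. \<exists>j<[p,q,r] ! i. y = n1 + sum_list (take i [p,q,r]) + j"
      then obtain i j where ij: "i < 3" "j < [p,q,r] ! i" "y = n1 + sum_list (take i [p,q,r]) + j" by blast
      have "j < p" using ij qp rq by (auto simp: less_Suc_eq numeral_3_eq_3)
      then have "y \<in> set (colj j)" using mem_colj ij by blast
      then show ?thesis using \<open>j < p\<close> by (auto simp: Ls_def)
    qed
  qed
qed
end


lemma I3_part0: "(I3 :: 'a::field mat3) \<in> part 0"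
proof -
  have "(I3 :: 'a mat3) = smat 1 (E 0 0) + smat 1 (E 1 1 + E 2 2)"
    by (auto simp: fun_eq_iff I3_def E_def smat_def)
  then show ?thesis unfolding part_def by auto
qed
lemma Hm_part1: "(Hm :: 'a::field mat3) \<in> part 1"
proof -
  have "(Hm :: 'a mat3) = smat 1 (E 1 1 - E 2 2) + smat 0 (E 1 2) + smat 0 (E 2 1)"
    by (auto simp: fun_eq_iff Hm_def E_def smat_def)
  then show ?thesis unfolding part_def by auto
qed
lemma Xm_part1: "(Xm :: 'a::field mat3) \<in> part 1"
proof -
  have "(Xm :: 'a mat3) = smat 0 (E 1 1 - E 2 2) + smat 1 (E 1 2) + smat 1 (E 2 1)"
    by (auto simp: fun_eq_iff Xm_def E_def smat_def)
  then show ?thesis unfolding part_def by auto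
qed
lemma Ym_part1: "(Ym :: 'a::field mat3) \<in> part 1"
proof -
  have "(Ym :: 'a mat3) = smat 0 (E 1 1 - E 2 2) + smat 1 (E 1 2) + smat (-1) (E 2 1)"
    by (auto simp: fun_eq_iff Ym_def E_def smat_def)
  then show ?thesis unfolding part_def by auto
qed

lemma Vf_rowsok: "rowsok (Vf x :: 'a::field mat3)"
  by (auto simp: Vf_def rowsok_def I3_def Hm_def Xm_def Ym_def E_def)

lemma count_lt: "q \<le> p \<Longrightarrow> (\<Sum>j<p. (if j < q then 1 else 0::nat)) = q"
proof -
  assume "q \<le> p"
  then have "{..<p} \<inter> {j. j < q} = {..<q}" by auto
  then show ?thesis by (simp add: sum.If_cases)
qed

lemma foldr_id:
  assumes "\<forall>L\<in>set Ms. F L = I3" "rowsok Q"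
  shows "foldr (\<lambda>L acc. mmul (F L) acc) Ms Q = Q"
  using assms by (induction Ms) (auto simp: I3_mmul)

context shp begin

lemma len_colj: "length (colj j) = 1 + (if j < q then 1 else 0) + (if j < r then 1 else 0)"
  by (simp add: colj_def)

lemma lenLs: "length (concat Ls) = n1 + p + q + r"
proof -
  have "length (concat Ls) = n1 + (\<Sum>j\<leftarrow>[0..<p]. length (colj j))"
    by (simp add: Ls_def length_concat comp_def)
  also have "(\<Sum>j\<leftarrow>[0..<p]. length (colj j)) = (\<Sum>j<p. length (colj j))"
    by (simp add: sum_set_upt_conv_sum_list_nat[symmetric] atLeast0LessThan)
  also have "\<dots> = p + q + r"
  proof -
    have "(\<Sum>j<p. length (colj j)) = (\<Sum>j<p. 1) + (\<Sum>j<p. (if j < q then 1 else 0::nat)) + (\<Sum>j<p. (if j < r then 1 else 0::nat))"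
      by (simp only: len_colj sum.distrib)
    then show ?thesis using qp rq count_lt[of q p] count_lt[of r p] by simp
  qed
  finally show ?thesis by simp
qed

lemma distLs: "distinct (concat Ls)"
proof (rule card_distinct)
  have "card (set (concat Ls)) = n1 + p + q + r" by (subst setLs) simp
  then show "card (set (concat Ls)) = length (concat Ls)" using lenLs by simp
qed

lemma u0_ml: "concat Ls \<in> mlwords (NN [l1, l2, [], []])"
  using distLs setLs NN by (simp add: mlwords_def)

lemma colgroup: "col_group [l1, l2, [], []] = BP Ls"
proof -
  let ?n = "n1 + p + q + r"
  have "(\<forall>k<?n. col_lab [l1, l2, [], []] (c k) = col_lab [l1, l2, [], []] k) \<longleftrightarrow>
        (\<forall>L\<in>set Ls. \<forall>x\<in>set L. c x \<in> set L)" if cp: "c permutes {0..<?n}" for c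
  proof
    assume A: "\<forall>k<?n. col_lab [l1, l2, [], []] (c k) = col_lab [l1, l2, [], []] k"
    show "\<forall>L\<in>set Ls. \<forall>x\<in>set L. c x \<in> set L"
    proof (intro ballI)
      fix L x assume L: "L \<in> set Ls" and x: "x \<in> set L"
      have xn: "x < ?n" using setLs L x by auto
      have cx: "c x < ?n" using permutes_in_image[OF cp] xn by simp
      show "c x \<in> set L" using key[OF L x cx] A xn by simp
    qed
  next
    assume B: "\<forall>L\<in>set Ls. \<forall>x\<in>set L. c x \<in> set L"
    show "\<forall>k<?n. col_lab [l1, l2, [], []] (c k) = col_lab [l1, l2, [], []] k"
    proof (intro allI impI)
      fix k assume k: "k < ?n"
      then have "k \<in> set (concat Ls)" using setLs by simp
      then obtain L where L: "L \<in> set Ls" "k \<in> set L" by auto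
      have cx: "c k < ?n" using permutes_in_image[OF cp] k by simp
      show "col_lab [l1, l2, [], []] (c k) = col_lab [l1, l2, [], []] k"
        using key[OF L cx] B L by simp
    qed
  qed
  then show ?thesis unfolding col_group_def BP_def NN setLs by auto
qed

lemma adm: "admissible [l1, l2, [], []] (Vf \<circ> row_lab [l1, l2, [], []])"
  unfolding admissible_def NN
proof (intro allI impI)
  fix k assume k: "k < n1 + p + q + r"
  from cover[OF k] show "(Vf \<circ> row_lab [l1, l2, [], []]) k \<in> part (block_of [l1, l2, [], []] k)"
  proof
    assume "k < n1" then show ?thesis using lab0 I3_part0 by (simp add: Vf_def)
  next
    assume "\<exists>i<3. \<exists>j<[p,q,r] ! i. k = n1 + sum_list (take i [p,q,r]) + j"
    then obtain i j where ij: "i < 3" "j < [p,q,r] ! i" "k = n1 + sum_list (take i [p,q,r]) + j" by blast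
    have "i = 0 \<or> i = 1 \<or> i = 2" using ij(1) by auto
    then show ?thesis using lab1[OF ij(1,2)] ij(3) Hm_part1 Xm_part1 Ym_part1 by (auto simp: Vf_def)
  qed
qed

end


context shp begin

lemma tvals:
  fixes t :: "nat \<Rightarrow> 'a::field mat3"
  assumes t: "t = Vf \<circ> row_lab [l1, l2, [], []]"
  shows "k < n1 \<Longrightarrow> t k = I3"
    "j < p \<Longrightarrow> t (n1 + j) = Hm"
    "j < q \<Longrightarrow> t (n1 + p + j) = Xm"
    "j < r \<Longrightarrow> t (n1 + p + q + j) = Ym"
proof -
  show "k < n1 \<Longrightarrow> t k = I3" using lab0 by (simp add: t Vf_def)
  show "j < p \<Longrightarrow> t (n1 + j) = Hm" using lab1(2)[of 0 j] by (simp add: t Vf_def)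
  show "j < q \<Longrightarrow> t (n1 + p + j) = Xm" using lab1(2)[of 1 j] by (simp add: t Vf_def)
  show "j < r \<Longrightarrow> t (n1 + p + q + j) = Ym" using lab1(2)[of 2 j] by (simp add: t Vf_def numeral_2_eq_2 add.assoc)
qed

lemma prod_nz:
  fixes t :: "nat \<Rightarrow> 'a::field_char_0 mat3"
  assumes t: "t = Vf \<circ> row_lab [l1, l2, [], []]"
  shows "foldr (\<lambda>L acc. mmul (Alt t L) acc) Ls I3 \<noteq> 0"
proof -
  let ?F = "\<lambda>L acc. mmul (Alt t L) acc"
  have colLB: "LBm (Alt t (colj j))" if j: "j < p" for j
  proof (cases "j < r")
    case True
    then have "j < q" using rq by simp
    then have "colj j = [n1 + j, n1 + p + j, n1 + p + q + j]" using True by (simp add: colj_def)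
    moreover have "distinct [n1 + j, n1 + p + j, n1 + p + q + j]" using j \<open>j < q\<close> by auto
    ultimately have "Alt t (colj j) = mprod [t (n1 + j), t (n1 + p + j), t (n1 + p + q + j)]
       - mprod [t (n1 + j), t (n1 + p + q + j), t (n1 + p + j)]
       - mprod [t (n1 + p + j), t (n1 + j), t (n1 + p + q + j)]
       + mprod [t (n1 + p + j), t (n1 + p + q + j), t (n1 + j)]
       + mprod [t (n1 + p + q + j), t (n1 + j), t (n1 + p + j)]
       - mprod [t (n1 + p + q + j), t (n1 + p + j), t (n1 + j)]"
      by (simp only: Alt3)
    also have "\<dots> = mprod [Hm, Xm, Ym] - mprod [Hm, Ym, Xm] - mprod [Xm, Hm, Ym]
     + mprod [Xm, Ym, Hm] + mprod [Ym, Hm, Xm] - mprod [Ym, Xm, Hm]"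
      using tvals[OF t] j True \<open>j < q\<close> by simp
    also have "\<dots> = smat (-6) J3" by (rule St3_val)
    finally have "Alt t (colj j) = smat (-6) J3" .
    then show ?thesis using LBm_J by simp
  next
    case F: False
    show ?thesis
    proof (cases "j < q")
      case True
      then have "colj j = [n1 + j, n1 + p + j]" using F by (simp add: colj_def)
      moreover have "n1 + j \<noteq> n1 + p + j" using j by auto
      ultimately have "Alt t (colj j) = mprod [t (n1 + j), t (n1 + p + j)] - mprod [t (n1 + p + j), t (n1 + j)]"
        using Alt2[of "n1 + j" "n1 + p + j" t] by simp
      also have "\<dots> = mprod [Hm, Xm] - mprod [Xm, Hm]" using tvals[OF t] j True by simp
      also have "\<dots> = smat 2 Ym" by (rule St2_val)
      finally have "Alt t (colj j) = smat 2 Ym" .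
      then show ?thesis using LBm_Y by simp
    next
      case False
      then have "colj j = [n1 + j]" using F rq by (simp add: colj_def)
      then have "Alt t (colj j) = mprod [t (n1 + j)]" by (simp only: Alt1)
      also have "\<dots> = mprod [Hm]" using tvals[OF t] j by simp
      also have "\<dots> = Hm" by (rule St1_val)
      finally have "Alt t (colj j) = Hm" .
      then show ?thesis using LBm_H by simp
    qed
  qed
  define Q where "Q = foldr ?F (map colj [0..<p]) I3"
  have Q: "Q = I3 \<or> LBm Q" unfolding Q_def by (rule foldr_LBm) (use colLB in auto)
  have Qr: "rowsok Q" using Q LBm_rowsok rowsok_I3 by auto
  have Qnz: "Q \<noteq> 0"
  proof
    assume "Q = 0"
    moreover have "(I3 :: 'a mat3) \<noteq> 0"
    proof
      assume "(I3 :: 'a mat3) = 0"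
      then have "(I3 :: 'a mat3) 0 0 = 0" by simp
      then show False by (simp add: I3_def)
    qed
    ultimately show False using Q LBm_nz by auto
  qed
  have "\<forall>L\<in>set (map (\<lambda>k. [k]) [0..<n1]). Alt t L = I3"
    using tvals(1)[OF t] by (auto simp: Alt1 mprod_def I3_mmul rowsok_I3)
  then have "foldr ?F (map (\<lambda>k. [k]) [0..<n1]) Q = Q" using Qr by (rule foldr_id)
  then have "foldr ?F Ls I3 = Q" by (simp add: Ls_def Q_def)
  then show ?thesis using Qnz by simp
qed

lemma eval_nz:
  shows "eval_poly [l1, l2, [], []] (young_sym [l1, l2, [], []] (delta (concat Ls)))
           (Vf \<circ> row_lab [l1, l2, [], []]) \<noteq> (0 :: 'a::field_char_0 mat3)"
proof -
  define lams where "lams = [l1, l2, [], []]"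
  define t :: "nat \<Rightarrow> 'a mat3" where "t = Vf \<circ> row_lab lams"
  let ?u = "concat Ls"
  let ?R = "row_group lams" and ?C = "col_group lams"
  let ?P = "foldr (\<lambda>L acc. mmul (Alt t L) acc) Ls I3"
  have Pnz: "?P \<noteq> 0" using prod_nz t_def lams_def by simp
  then obtain i j where ij: "?P i j \<noteq> 0" by (auto simp: fun_eq_iff)
  have admt: "admissible lams t" using adm by (simp add: t_def lams_def)
  have un: "?u \<in> mlwords (NN lams)" using u0_ml by (simp add: lams_def)
  have rinv: "map (t \<circ> rr \<circ> c) ?u = map (t \<circ> c) ?u" if r: "rr \<in> ?R" and c: "c \<in> ?C" for rr c
  proof (rule map_cong[OF refl])
    fix x assume "x \<in> set ?u"
    then have "x < n1 + p + q + r" using setLs by auto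
    then have "x < NN lams" using NN by (simp add: lams_def)
    then have "c x < NN lams" using permutes_in_image[OF col_group_perm[OF c]] by simp
    then have "row_lab lams (rr (c x)) = row_lab lams (c x)" using r by (auto simp: row_group_def)
    then show "(t \<circ> rr \<circ> c) x = (t \<circ> c) x" by (simp add: t_def)
  qed
  have "eval_poly lams (young_sym lams (delta ?u)) t i j =
     (\<Sum>rr\<in>?R. \<Sum>c\<in>?C. of_int (sign c) * mprod (map (t \<circ> rr \<circ> c) ?u) i j)"
    by (rule EVAL_delta[OF admt un])
  also have "\<dots> = (\<Sum>rr\<in>?R. \<Sum>c\<in>?C. of_int (sign c) * mprod (map (t \<circ> c) ?u) i j)"
  proof (intro sum.cong refl)
    fix rr c assume "rr \<in> ?R" "c \<in> ?C"
    then show "of_int (sign c) * mprod (map (t \<circ> rr \<circ> c) ?u) i j = of_int (sign c) * mprod (map (t \<circ> c) ?u) i j"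
      by (simp only: rinv)
  qed
  also have "\<dots> = of_nat (card ?R) * (\<Sum>c\<in>?C. of_int (sign c) * mprod (map (t \<circ> c) ?u) i j)"
    by simp
  also have "(\<Sum>c\<in>?C. of_int (sign c) * mprod (map (t \<circ> c) ?u) i j) =
      (\<Sum>c\<in>BP Ls. smat (of_int (sign c)) (mprod (map (t \<circ> c) ?u))) i j"
    using colgroup by (simp add: sum_fun_app smat_def lams_def)
  also have "\<dots> = ?P i j"
  proof -
    have fa: "(\<Sum>c\<in>BP Ls. smat (of_int (sign c)) (mprod (map (t \<circ> c) ?u))) = ?P"
    proof (rule factor[OF distLs])
      show "rowsok (t x)" for x by (simp add: t_def Vf_rowsok)
    qed
    show ?thesis by (simp only: fa)
  qed
  finally have E: "eval_poly lams (young_sym lams (delta ?u)) t i j = of_nat (card ?R) * ?P i j" .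
  have "id \<in> ?R" by (auto simp: row_group_def)
  then have "card ?R \<noteq> 0" using finite_row_group by auto
  then have "eval_poly lams (young_sym lams (delta ?u)) t i j \<noteq> 0" using E ij by simp
  then show ?thesis by (auto simp: lams_def t_def)
qed

end


lemma shp_ex:
  assumes "is_partition l1" "is_partition l2" "length l1 \<le> 1" "length l2 \<le> 3"
  shows "\<exists>n1 p q r. shp l1 l2 n1 p q r"
proof -
  obtain n1 where l1: "(l1 = [] \<and> n1 = 0) \<or> (l1 = [n1] \<and> 0 < n1)"
  proof (cases l1)
    case Nil then show ?thesis using that by auto
  next
    case (Cons x t)
    then have "t = []" using assms(3) by simp
    moreover have "0 < x" using assms(1) Cons by (simp add: is_partition_def)
    ultimately show ?thesis using that Cons by auto
  qed
  have "\<exists>p q r. l2 @ replicate (3 - length l2) 0 = [p, q, r] \<and> q \<le> p \<and> r \<le> q"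
  proof (cases l2)
    case Nil then show ?thesis by (simp add: numeral_3_eq_3)
  next
    case (Cons x t)
    show ?thesis
    proof (cases t)
      case Nil then show ?thesis using Cons by (simp add: numeral_3_eq_3 numeral_2_eq_2)
    next
      case (Cons y t')
      have yx: "y \<le> x" using assms(2) \<open>l2 = x # t\<close> Cons by (simp add: is_partition_def)
      show ?thesis
      proof (cases t')
        case Nil then show ?thesis using \<open>l2 = x # t\<close> Cons yx by (simp add: numeral_3_eq_3)
      next
        case (Cons z t'')
        then have "t'' = []" using assms(4) \<open>l2 = x # t\<close> \<open>t = y # t'\<close> by simp
        moreover have "z \<le> y" using assms(2) \<open>l2 = x # t\<close> \<open>t = y # t'\<close> Cons by (simp add: is_partition_def)
        ultimately show ?thesis using \<open>l2 = x # t\<close> \<open>t = y # t'\<close> Cons yx by simp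
      qed
    qed
  qed
  then obtain p q r where "l2 @ replicate (3 - length l2) 0 = [p, q, r]" "q \<le> p" "r \<le> q" by blast
  then have "shp l1 l2 n1 p q r" using l1 by (simp add: shp_def)
  then show ?thesis by blast
qed

theorem proposition5p2:
  fixes l1 l2 :: "nat list"
  assumes "is_partition l1" and "is_partition l2"
    and "length l1 \<le> 2" and "length l2 \<le> 3"
  shows "star_mult TYPE('a::field_char_0) l1 l2 [] [] \<noteq> 0 \<longleftrightarrow> length l1 \<le> 1"
proof -
  interpret v: vector_space "fscale :: 'a \<Rightarrow> ((nat \<Rightarrow> 'a mat3) \<Rightarrow> 'a mat3) \<Rightarrow> _"
    by (rule vs_fscale)
  let ?V = "range (\<lambda>f :: nat list \<Rightarrow> 'a. eval_poly [l1,l2,[],[]] (young_sym [l1,l2,[],[]] f))"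
  have sm: "star_mult TYPE('a) l1 l2 [] [] = v.dim ?V" by (simp add: star_mult_def)
  show ?thesis
  proof (cases "length l1 \<le> 1")
    case True
    obtain n1 p q r where sh: "shp l1 l2 n1 p q r" using shp_ex[OF assms(1,2) True assms(4)] by blast
    let ?u = "concat (shp.Ls n1 p q r)"
    let ?v = "eval_poly [l1,l2,[],[]] (young_sym [l1,l2,[],[]] (delta ?u :: nat list \<Rightarrow> 'a))"
    let ?T = "(\<lambda>u. eval_poly [l1,l2,[],[]] (young_sym [l1,l2,[],[]] (delta u :: nat list \<Rightarrow> 'a))) ` mlwords (NN [l1,l2,[],[]])"
    have vnz: "?v \<noteq> 0"
    proof
      assume "?v = 0"
      then have "?v (Vf \<circ> row_lab [l1, l2, [], []]) = 0" by simp
      then show False using shp.eval_nz[OF sh, where 'a='a] by simp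
    qed
    have vin: "?v \<in> ?V" by simp
    have sub: "?V \<subseteq> v.span ?T"
    proof
      fix x assume "x \<in> ?V"
      then obtain f :: "nat list \<Rightarrow> 'a" where x: "x = eval_poly [l1,l2,[],[]] (young_sym [l1,l2,[],[]] f)" by blast
      show "x \<in> v.span ?T"
        unfolding x eval_decomp[of "[l1,l2,[],[]]" f]
        by (intro v.span_sum v.span_scale v.span_base) auto
    qed
    have fin: "finite ?T" by (simp add: finite_mlwords)
    have "v.dim ?V \<noteq> 0" using v.dim_pos_set[OF vin vnz sub fin] .
    then show ?thesis using True sm by simp
  next
    case False
    then have "length l1 = 2" using assms(3) by simp
    then obtain a b where l1: "l1 = [a, b]"
      by (metis (no_types, lifting) length_0_conv length_Suc_conv numeral_2_eq_2)
    have ab: "0 < a" "0 < b" using assms(1) l1 by (auto simp: is_partition_def)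
    have "?V \<subseteq> {0}" using zero_dir[OF l1 ab] by auto
    then have "v.dim ?V = 0" by (rule v.dim_zero_set)
    then show ?thesis using False sm by simp
  qed
qed


end
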